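(* Let $G=(V,E)$ be a computation graph with $n=|V|$ vertices and at least one edge, and let $M$ be the fast-memory size. Let $J^*_G$ be the minimum number of non-trivial I/Os over all valid evaluations of $G$. Let $L=D-A$ be the Laplacian of the underlying undirected unweighted graph of $G$, with eigenvalues $\lambda_1(L)\le\dots\le\lambda_n(L)$ in increasing order. Then for every integer $k$ with $1\le k\le n$, $$J^*_G \;\geq\; \frac{1}{\max_{v\in V} d_{out}(v)}\left\lfloor \frac{n}{k}\right\rfloor \sum_{i=1}^k \lambda_i(L) \;-\; 2kM,$$ where $d_{out}(v)$ is the out-degree of $v$ in $G$.
   Context: A computation graph is a finite directed acyclic graph $G=(V,E)$. Each vertex is an operation producing a single element, and an edge $(u,v)$ means the result of $u$ is an operand of $v$. Sources are the inputs and sinks are the outputs. Execution model: a single processor has a fast memory holding at most $M$ elements and an unbounded slow memory. Every vertex is evaluated exactly once (no recomputation), in an order that is topological with respect to $G$. To evaluate $v$, all parents of $v$ must be in fast memory; a parent not present must be read from slow memory. The eviction policy is unconstrained, but a value that is evicted while still needed by a later vertex must first be written to slow memory. Only non-trivial I/O is counted. Inputs can be placed directly into fast memory at no cost, and outputs are reported immediately at no cost when computed. However, an input that is evicted while still needed must be written to slow memory. Each transfer of one element between fast and slow memory counts as one I/O. $A$ is the adjacency matrix of the undirected graph obtained from $G$ by forgetting edge directions, and $D$ is its diagonal degree matrix. *)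

theory Defs
  imports "Jordan_Normal_Form.Char_Poly" "HOL-Library.Extended_Real"
begin

(* A computation graph: vertex set {0..<n} (vertices are labelled by 0..n-1),
   directed edge set E, (u,v) \<in> E meaning u is an operand of v. *)
definition comp_graph :: "nat \<Rightarrow> (nat \<times> nat) set \<Rightarrow> bool" where
  "comp_graph n E \<longleftrightarrow> E \<subseteq> {0..<n} \<times> {0..<n} \<and> acyclic E"

definition parents :: "(nat \<times> nat) set \<Rightarrow> nat \<Rightarrow> nat set" where
  "parents E v = {u. (u, v) \<in> E}"

definition out_deg :: "(nat \<times> nat) set \<Rightarrow> nat \<Rightarrow> nat" where
  "out_deg E v = card {w. (v, w) \<in> E}"

(* Execution model.  Machine state: (fast memory, slow memory, already evaluated). *)
datatype io_op = Compute nat | Read nat | Write nat | Evict nat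

type_synonym mstate = "nat set \<times> nat set \<times> nat set"

(* Evaluating v (for a source: placing
   the input into fast memory) costs nothing, requires that v has not been evaluated
   yet (no recomputation) and all parents of v are in fast memory; v is then in fast
   memory.  Eviction is free; a value evicted without having been written
   is lost, so it can never be used again (this is exactly the write-before-evict
   requirement for values still needed). *)
fun step :: "nat \<Rightarrow> (nat \<times> nat) set \<Rightarrow> io_op \<Rightarrow> mstate \<Rightarrow> mstate option" where
  "step M E (Compute v) (F, S, C) =
     (if v \<notin> C \<and> parents E v \<subseteq> F \<and> card (insert v F) \<le> M
      then Some (insert v F, S, insert v C) else None)"
| "step M E (Read v) (F, S, C) =
     (if v \<in> S \<and> card (insert v F) \<le> M then Some (insert v F, S, C) else None)"
| "step M E (Write v) (F, S, C) =
     (if v \<in> F then Some (F, insert v S, C) else None)"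
| "step M E (Evict v) (F, S, C) =
     (if v \<in> F then Some (F - {v}, S, C) else None)"

fun run :: "nat \<Rightarrow> (nat \<times> nat) set \<Rightarrow> io_op list \<Rightarrow> mstate \<Rightarrow> mstate option" where
  "run M E [] st = Some st"
| "run M E (o1 # os) st = (case step M E o1 st of None \<Rightarrow> None | Some st' \<Rightarrow> run M E os st')"

definition valid_eval :: "nat \<Rightarrow> nat \<Rightarrow> (nat \<times> nat) set \<Rightarrow> io_op list \<Rightarrow> bool" where
  "valid_eval M n E ops \<longleftrightarrow>
     (\<forall>op \<in> set ops. case op of Compute v \<Rightarrow> v < n | Read v \<Rightarrow> v < n
                     | Write v \<Rightarrow> v < n | Evict v \<Rightarrow> v < n) \<and>
     (\<exists>F S. run M E ops ({}, {}, {}) = Some (F, S, {0..<n}))"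

fun is_io :: "io_op \<Rightarrow> bool" where
  "is_io (Read _) = True"
| "is_io (Write _) = True"
| "is_io (Compute _) = False"
| "is_io (Evict _) = False"

definition io_cost :: "io_op list \<Rightarrow> nat" where
  "io_cost ops = length (filter is_io ops)"

(* J*_G: minimum number of non-trivial I/Os over all valid evaluations
   (\<infinity> if there is no valid evaluation). *)
definition J_star :: "nat \<Rightarrow> nat \<Rightarrow> (nat \<times> nat) set \<Rightarrow> enat" where
  "J_star M n E = (INF ops \<in> {ops. valid_eval M n E ops}. enat (io_cost ops))"

definition adj :: "(nat \<times> nat) set \<Rightarrow> nat \<Rightarrow> nat \<Rightarrow> bool" where
  "adj E u v \<longleftrightarrow> u \<noteq> v \<and> ((u, v) \<in> E \<or> (v, u) \<in> E)"

definition adj_mat :: "nat \<Rightarrow> (nat \<times> nat) set \<Rightarrow> real mat" where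
  "adj_mat n E = mat n n (\<lambda>(i, j). if adj E i j then 1 else 0)"

definition deg_mat :: "nat \<Rightarrow> (nat \<times> nat) set \<Rightarrow> real mat" where
  "deg_mat n E = mat n n (\<lambda>(i, j). if i = j then real (card {w \<in> {0..<n}. adj E i w}) else 0)"

definition laplacian :: "nat \<Rightarrow> (nat \<times> nat) set \<Rightarrow> real mat" where
  "laplacian n E = deg_mat n E - adj_mat n E"

(* Eigenvalues (with multiplicity, as roots of the characteristic polynomial) in
   increasing order; eig_asc A i is \<lambda>_{i+1}(A) (0-based indexing). *)
definition eig_asc :: "real mat \<Rightarrow> nat \<Rightarrow> real" where
  "eig_asc A i = sorted_list_of_multiset (proots (char_poly A)) ! i"

end

theory Submission
  imports Defs "HOL-Combinatorics.List_Permutation"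
begin
lemma sym_real_eigvec:
  fixes A :: "real mat"
  assumes A: "A \<in> carrier_mat n n" and sym: "A\<^sup>T = A" and n: "n > 0"
  shows "\<exists>lam v. v \<in> carrier_vec n \<and> v \<noteq> 0\<^sub>v n \<and> A *\<^sub>v v = lam \<cdot>\<^sub>v v"
proof -
  define Ac where "Ac = map_mat complex_of_real A"
  have Ac: "Ac \<in> carrier_mat n n" using A by (simp add: Ac_def)
  obtain as where cp: "char_poly Ac = (\<Prod>a\<leftarrow>as. [:- a, 1:])" and len: "length as = n"
    using char_poly_factorized[OF Ac] by blast
  obtain z rest where as: "as = z # rest" using len n by (cases as) auto
  have "poly (char_poly Ac) z = 0" unfolding cp as by simp
  hence "eigenvalue Ac z" using eigenvalue_root_char_poly[OF Ac] by simp
  then obtain v where ev: "eigenvector Ac v z" unfolding eigenvalue_def by blast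
  have v: "v \<in> carrier_vec n" and v0: "v \<noteq> 0\<^sub>v n" and Av: "Ac *\<^sub>v v = z \<cdot>\<^sub>v v"
    using ev Ac unfolding eigenvector_def by auto
  have sym': "\<And>i j. i < n \<Longrightarrow> j < n \<Longrightarrow> A $$ (j, i) = A $$ (i, j)"
    using sym A by (metis carrier_matD(1) carrier_matD(2) index_transpose_mat(1))
  have comp: "(\<Sum>j<n. complex_of_real (A $$ (i, j)) * v $ j) = z * v $ i" if i: "i < n" for i
  proof -
    have "(Ac *\<^sub>v v) $ i = z * v $ i" using Av i v by simp
    moreover have "(Ac *\<^sub>v v) $ i = (\<Sum>j<n. complex_of_real (A $$ (i, j)) * v $ j)"
      using i v A Ac unfolding Ac_def
      by (simp add: scalar_prod_def row_def lessThan_atLeast0)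
    ultimately show ?thesis by simp
  qed
  define s where "s = (\<Sum>i<n. cnj (v $ i) * (\<Sum>j<n. complex_of_real (A $$ (i, j)) * v $ j))"
  define N where "N = (\<Sum>i<n. cnj (v $ i) * v $ i)"
  have "s = (\<Sum>i<n. cnj (v $ i) * (z * v $ i))" unfolding s_def
    by (rule sum.cong) (auto simp: comp)
  hence sz: "s = z * N" unfolding N_def
    by (simp add: sum_distrib_left mult.commute mult.left_commute)
  have "cnj s = (\<Sum>i<n. v $ i * (\<Sum>j<n. complex_of_real (A $$ (i, j)) * cnj (v $ j)))"
    unfolding s_def by (simp add: cnj_sum)
  also have "\<dots> = (\<Sum>i<n. \<Sum>j<n. complex_of_real (A $$ (i, j)) * cnj (v $ j) * v $ i)"
    by (simp add: sum_distrib_left mult.commute mult.left_commute)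
  also have "\<dots> = (\<Sum>j<n. \<Sum>i<n. complex_of_real (A $$ (i, j)) * cnj (v $ j) * v $ i)"
    by (rule sum.swap)
  also have "\<dots> = s" unfolding s_def
    by (auto simp add: sum_distrib_left mult.commute mult.left_commute sym' intro!: sum.cong)
  finally have cs: "cnj s = s" .
  have "cnj s = cnj z * N" unfolding sz N_def by (simp add: cnj_sum mult.commute)
  with cs sz have zN: "(z - cnj z) * N = 0" by (simp add: algebra_simps)
  obtain i0 where i0: "i0 < n" "v $ i0 \<noteq> 0" using v0 v by (metis eq_vecI carrier_vecD index_zero_vec)
  have "Re N = (\<Sum>i<n. (cmod (v $ i))\<^sup>2)" unfolding N_def
    by (simp add: Re_sum mult.commute complex_norm_square[symmetric] del: of_real_power)
  also have "\<dots> > 0"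
    by (rule sum_pos2[of _ i0]) (use i0 in auto)
  finally have "N \<noteq> 0" by auto
  with zN have zc: "cnj z = z" by simp
  hence imz: "Im z = 0" using arg_cong[OF zc, of Im] unfolding cnj.sel by linarith
  define x where "x = vec n (\<lambda>i. Re (v $ i))"
  define y where "y = vec n (\<lambda>i. Im (v $ i))"
  have Ax: "A *\<^sub>v x = Re z \<cdot>\<^sub>v x" and Ay: "A *\<^sub>v y = Re z \<cdot>\<^sub>v y"
  proof -
    {
      fix i assume i: "i < n"
      have "Re (\<Sum>j<n. complex_of_real (A $$ (i, j)) * v $ j) = (\<Sum>j<n. A $$ (i, j) * Re (v $ j))"
        by (simp add: Re_sum)
      moreover have "Im (\<Sum>j<n. complex_of_real (A $$ (i, j)) * v $ j) = (\<Sum>j<n. A $$ (i, j) * Im (v $ j))"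
        by (simp add: Im_sum)
      ultimately have "(\<Sum>j<n. A $$ (i, j) * Re (v $ j)) = Re z * Re (v $ i)"
        "(\<Sum>j<n. A $$ (i, j) * Im (v $ j)) = Re z * Im (v $ i)"
        using comp[OF i] imz by auto
      hence "(A *\<^sub>v x) $ i = (Re z \<cdot>\<^sub>v x) $ i" "(A *\<^sub>v y) $ i = (Re z \<cdot>\<^sub>v y) $ i"
        using i A unfolding x_def y_def
        by (simp_all add: scalar_prod_def row_def lessThan_atLeast0)
    }
    thus "A *\<^sub>v x = Re z \<cdot>\<^sub>v x" "A *\<^sub>v y = Re z \<cdot>\<^sub>v y"
      using A by (auto intro!: eq_vecI simp: x_def y_def)
  qed
  show ?thesis
  proof (cases "Re (v $ i0) = 0")
    case True
    hence "Im (v $ i0) \<noteq> 0" using i0 complex_eq_iff by force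
    hence "y \<noteq> 0\<^sub>v n" using i0 unfolding y_def by (metis index_vec index_zero_vec(1))
    thus ?thesis using Ay by (intro exI[of _ "Re z"] exI[of _ y]) (auto simp: y_def)
  next
    case False
    hence "x \<noteq> 0\<^sub>v n" using i0 unfolding x_def by (metis index_vec index_zero_vec(1))
    thus ?thesis using Ax by (intro exI[of _ "Re z"] exI[of _ x]) (auto simp: x_def)
  qed
qed

lemma sum_delta_l: "i < (N::nat) \<Longrightarrow> (\<Sum>k<N. (if i = k then 1 else 0) * (f k::real)) = f i"
proof -
  assume "i < N"
  have "(\<Sum>k<N. (if i = k then 1 else 0) * (f k::real)) = (\<Sum>k<N. if i = k then f k else 0)"
    by (rule sum.cong) auto
  also have "\<dots> = f i" using \<open>i < N\<close> by (subst sum.delta') auto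
  finally show ?thesis .
qed
lemma sum_delta_r: "j < (N::nat) \<Longrightarrow> (\<Sum>k<N. (f k::real) * (if k = j then 1 else 0)) = f j"
proof -
  assume "j < N"
  have "(\<Sum>k<N. (f k::real) * (if k = j then 1 else 0)) = (\<Sum>k<N. if k = j then f k else 0)"
    by (rule sum.cong) auto
  also have "\<dots> = f j" using \<open>j < N\<close> by (subst sum.delta) auto
  finally show ?thesis .
qed

lemma householder:
  fixes v :: "real vec"
  assumes v: "v \<in> carrier_vec (Suc n)" and vv: "v \<bullet> v = 1"
  shows "\<exists>H. H \<in> carrier_mat (Suc n) (Suc n) \<and> H\<^sup>T = H \<and> H * H = 1\<^sub>m (Suc n)
           \<and> H *\<^sub>v unit_vec (Suc n) 0 = v"
proof -
  let ?N = "Suc n"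
  have vv': "(\<Sum>i<?N. v $ i * v $ i) = 1" using vv v by (simp add: scalar_prod_def lessThan_atLeast0)
  show ?thesis
  proof (cases "v $ 0 = 1")
    case True
    have "(\<Sum>i<?N. v $ i * v $ i) = v $ 0 * v $ 0 + (\<Sum>i\<in>{1..<?N}. v $ i * v $ i)"
      by (simp add: lessThan_atLeast0 sum.atLeast_Suc_lessThan)
    hence s0: "(\<Sum>i\<in>{1..<?N}. v $ i * v $ i) = 0" using vv' True by simp
    have "\<forall>i\<in>{1..<?N}. v $ i * v $ i = 0"
      using sum_nonneg_eq_0_iff[of "{1..<?N}" "\<lambda>i. v $ i * v $ i"] s0 by simp
    hence "v = unit_vec ?N 0" using v True by (intro eq_vecI) (auto simp: unit_vec_def)
    thus ?thesis by (intro exI[of _ "1\<^sub>m ?N"]) auto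
  next
    case False
    define w where "w i = v $ i - (if i = 0 then 1 else 0)" for i
    define c where "c = 1 / (1 - v $ 0)"
    have ww: "(\<Sum>k<?N. w k * w k) = 2 * (1 - v $ 0)"
    proof -
      have "(\<Sum>k<?N. w k * w k) = (\<Sum>k<?N. v $ k * v $ k) - 2 * (\<Sum>k<?N. (if k = 0 then v $ k else 0))
             + (\<Sum>k<?N. (if k = 0 then 1 else 0))"
        unfolding w_def sum_subtractf[symmetric] sum_distrib_left sum.distrib[symmetric]
        by (rule sum.cong) (auto simp: algebra_simps)
      also have "\<dots> = 2 * (1 - v $ 0)" using vv' by (simp add: sum.delta)
      finally show ?thesis .
    qed
    have nz: "1 - v $ 0 \<noteq> 0" using False by simp
    have c1: "c * (1 - v $ 0) = 1" using nz unfolding c_def by simp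
    have c2: "c * c * (2 * (1 - v $ 0)) = 2 * c"
    proof -
      have "c * c * (2 * (1 - v $ 0)) = 2 * c * (c * (1 - v $ 0))" by (simp add: algebra_simps)
      thus ?thesis using c1 by simp
    qed
    have cw0: "c * w 0 = -1" using nz unfolding c_def w_def by (simp add: field_simps)
    define H where "H = mat ?N ?N (\<lambda>(i, j). (if i = j then 1 else 0) - c * w i * w j)"
    have Hc: "H \<in> carrier_mat ?N ?N" unfolding H_def by simp
    have HT: "H\<^sup>T = H" unfolding H_def by (intro eq_matI) auto
    have HH: "H * H = 1\<^sub>m ?N"
    proof (rule eq_matI)
      fix i j assume i: "i < dim_row (1\<^sub>m ?N)" and j: "j < dim_col (1\<^sub>m ?N)"
      hence i: "i < ?N" and j: "j < ?N" by auto
      have "(H * H) $$ (i, j) = (\<Sum>k<?N. ((if i = k then 1 else 0) - c * w i * w k) * ((if k = j then 1 else 0) - c * w k * w j))"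
        using i j unfolding H_def by (simp add: scalar_prod_def lessThan_atLeast0 row_def col_def)
      also have "\<dots> = (\<Sum>k<?N. (if i = k then 1 else 0) * (if k = j then 1 else 0))
          - (\<Sum>k<?N. (if i = k then 1 else 0) * (c * w k * w j))
          - (\<Sum>k<?N. (c * w i * w k) * (if k = j then 1 else 0))
          + c * c * w i * w j * (\<Sum>k<?N. w k * w k)"
        unfolding sum_subtractf[symmetric] sum_distrib_left sum.distrib[symmetric]
        by (rule sum.cong) (auto simp: algebra_simps)
      also have "\<dots> = (if i = j then 1 else 0) - c * w i * w j - c * w i * w j + c * c * w i * w j * (2 * (1 - v $ 0))"
        unfolding ww using i j by (simp add: sum_delta_l sum_delta_r)
      also have "\<dots> = (if i = j then 1 else 0)"
      proof -
        have e: "c * c * w i * w j * (2 * (1 - v $ 0)) = (c * c * (2 * (1 - v $ 0))) * (w i * w j)"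
          by (simp only: ac_simps)
        show ?thesis unfolding e c2 by (simp add: algebra_simps)
      qed
      finally show "(H * H) $$ (i, j) = 1\<^sub>m ?N $$ (i, j)" using i j by simp
    qed (auto simp: H_def)
    have He: "H *\<^sub>v unit_vec ?N 0 = v"
    proof (rule eq_vecI)
      fix i assume "i < dim_vec v"
      hence i: "i < ?N" using v by simp
      have "(H *\<^sub>v unit_vec ?N 0) $ i = H $$ (i, 0)"
        using i Hc by (simp add: row_def)
      also have "\<dots> = (if i = 0 then 1 else 0) - c * w 0 * w i" using i unfolding H_def by simp
      also have "\<dots> = v $ i" using cw0 unfolding w_def by simp
      finally show "(H *\<^sub>v unit_vec ?N 0) $ i = v $ i" .
    qed (use v Hc in auto)
    show ?thesis using Hc HT HH He by blast
  qed
qed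

definition diag_of :: "nat \<Rightarrow> (nat \<Rightarrow> real) \<Rightarrow> real mat" where
  "diag_of n mu = mat n n (\<lambda>(i, j). if i = j then mu i else 0)"

lemma spectral:
  fixes A :: "real mat"
  assumes "A \<in> carrier_mat n n" and "A\<^sup>T = A"
  shows "\<exists>Q mu. Q \<in> carrier_mat n n \<and> Q\<^sup>T * Q = 1\<^sub>m n \<and> Q\<^sup>T * A * Q = diag_of n mu"
  using assms
proof (induction n arbitrary: A)
  case 0
  show ?case
    by (intro exI[of _ "1\<^sub>m 0"] exI[of _ "\<lambda>_. 0"]) (auto intro!: eq_matI simp: diag_of_def)
next
  case (Suc n)
  let ?N = "Suc n"
  have A: "A \<in> carrier_mat ?N ?N" and sym: "A\<^sup>T = A" using Suc.prems by auto
  obtain lam v0 where v0: "v0 \<in> carrier_vec ?N" "v0 \<noteq> 0\<^sub>v ?N" "A *\<^sub>v v0 = lam \<cdot>\<^sub>v v0"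
    using sym_real_eigvec[OF A sym] by auto
  have "v0 \<bullet> v0 \<noteq> 0" using v0 conjugate_square_eq_0_vec[OF v0(1)] by simp 
  moreover have "v0 \<bullet> v0 \<ge> 0" by (simp add: scalar_prod_def sum_nonneg)
  ultimately have pos: "v0 \<bullet> v0 > 0" by simp
  define v where "v = (1 / sqrt (v0 \<bullet> v0)) \<cdot>\<^sub>v v0"
  have v: "v \<in> carrier_vec ?N" using v0 unfolding v_def by simp
  have vv: "v \<bullet> v = 1" using pos v0 unfolding v_def
    by (simp add: smult_scalar_prod_distrib[of _ ?N] scalar_prod_smult_distrib[of _ ?N])
  have Av: "A *\<^sub>v v = lam \<cdot>\<^sub>v v" unfolding v_def using v0 A
    by (simp add: mult_mat_vec smult_smult_assoc mult.commute)
  obtain H where H: "H \<in> carrier_mat ?N ?N" and HT: "H\<^sup>T = H" and HH: "H * H = 1\<^sub>m ?N"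
    and He: "H *\<^sub>v unit_vec ?N 0 = v"
    using householder[OF v vv] by blast
  define B where "B = H * A * H"
  have B: "B \<in> carrier_mat ?N ?N" unfolding B_def using H A by simp
  have BT: "B\<^sup>T = B"
  proof -
    have HA: "H * A \<in> carrier_mat ?N ?N" using H A by simp
    have "B\<^sup>T = H\<^sup>T * (H * A)\<^sup>T" unfolding B_def by (rule transpose_mult[OF HA H])
    also have "(H * A)\<^sup>T = A\<^sup>T * H\<^sup>T" by (rule transpose_mult[OF H A])
    finally show ?thesis unfolding HT sym B_def using H A
      by (simp add: assoc_mult_mat[of H ?N ?N A ?N H ?N])
  qed
  have e0: "unit_vec ?N 0 \<in> carrier_vec ?N" by simp
  have Be: "B *\<^sub>v unit_vec ?N 0 = lam \<cdot>\<^sub>v unit_vec ?N 0"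
  proof -
    have "B *\<^sub>v unit_vec ?N 0 = H *\<^sub>v (A *\<^sub>v (H *\<^sub>v unit_vec ?N 0))"
      unfolding B_def using H A e0
      by (simp add: assoc_mult_mat_vec[of _ ?N ?N _ ?N])
    also have "\<dots> = lam \<cdot>\<^sub>v (H *\<^sub>v v)" using He Av H v by (simp add: mult_mat_vec)
    also have "H *\<^sub>v v = unit_vec ?N 0"
    proof -
      have "H *\<^sub>v v = (H * H) *\<^sub>v unit_vec ?N 0" unfolding He[symmetric]
        using H e0 by (simp add: assoc_mult_mat_vec[of _ ?N ?N _ ?N])
      thus ?thesis using HH e0 by simp
    qed
    finally show ?thesis .
  qed
  have Bcol: "B $$ (i, 0) = (if i = 0 then lam else 0)" if "i < ?N" for i
  proof -
    have "(B *\<^sub>v unit_vec ?N 0) $ i = B $$ (i, 0)" using that B by (simp add: row_def)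
    thus ?thesis using Be that by (cases "i = 0") auto
  qed
  have Bsym: "B $$ (i, j) = B $$ (j, i)" if "i < ?N" "j < ?N" for i j
    using BT B that by (metis carrier_matD(1) carrier_matD(2) index_transpose_mat(1))
  define B3 where "B3 = mat n n (\<lambda>(i, j). B $$ (Suc i, Suc j))"
  have B3: "B3 \<in> carrier_mat n n" unfolding B3_def by simp
  have B3T: "B3\<^sup>T = B3" unfolding B3_def by (intro eq_matI) (auto simp: Bsym)
  obtain Q' mu' where Q': "Q' \<in> carrier_mat n n" and Q'Q': "Q'\<^sup>T * Q' = 1\<^sub>m n"
    and Q'B: "Q'\<^sup>T * B3 * Q' = diag_of n mu'"
    using Suc.IH[OF B3 B3T] by blast
  define L1 where "L1 = mat 1 1 (\<lambda>_. lam)"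
  have Bblock: "B = four_block_mat L1 (0\<^sub>m 1 n) (0\<^sub>m n 1) B3"
  proof (rule eq_matI)
    fix i j assume "i < dim_row (four_block_mat L1 (0\<^sub>m 1 n) (0\<^sub>m n 1) B3)"
      "j < dim_col (four_block_mat L1 (0\<^sub>m 1 n) (0\<^sub>m n 1) B3)"
    hence i: "i < ?N" and j: "j < ?N" using B3 by (auto simp: L1_def)
    show "B $$ (i, j) = four_block_mat L1 (0\<^sub>m 1 n) (0\<^sub>m n 1) B3 $$ (i, j)"
    proof (cases "i = 0 \<or> j = 0")
      case True
      thus ?thesis using i j Bcol[of i] Bcol[of j] Bsym[of i j] B3 by (auto simp: L1_def)
    next
      case False
      thus ?thesis using i j B3 by (auto simp: L1_def B3_def)
    qed
  qed (use B B3 in \<open>auto simp: L1_def\<close>)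
  define K where "K = four_block_mat (1\<^sub>m 1) (0\<^sub>m 1 n) (0\<^sub>m n 1) Q'"
  have K: "K \<in> carrier_mat ?N ?N" unfolding K_def using Q'
    using four_block_carrier_mat[of "1\<^sub>m 1" 1 1 Q' n n] by simp
  have KT: "K\<^sup>T = four_block_mat (1\<^sub>m 1) (0\<^sub>m 1 n) (0\<^sub>m n 1) Q'\<^sup>T"
    unfolding K_def using Q' by (subst transpose_four_block_mat) auto
  have KTK: "K\<^sup>T * K = 1\<^sub>m ?N"
  proof -
    have "K\<^sup>T * K = four_block_mat (1\<^sub>m 1) (0\<^sub>m 1 n) (0\<^sub>m n 1) (1\<^sub>m n)"
      unfolding KT unfolding K_def using Q' Q'Q'
      by (subst mult_four_block_mat[of _ 1 1 _ n _ n _ _ 1 _ n]) auto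
    also have "\<dots> = 1\<^sub>m ?N" using four_block_one_mat[of 1 n] by simp
    finally show ?thesis .
  qed
  define Q where "Q = H * K"
  have Q: "Q \<in> carrier_mat ?N ?N" unfolding Q_def using H K by simp
  have QT: "Q\<^sup>T = K\<^sup>T * H" unfolding Q_def using H K HT by (simp add: transpose_mult[of _ ?N ?N])
  have "Q\<^sup>T * Q = K\<^sup>T * (H * H) * K" unfolding QT unfolding Q_def using H K
    by (simp add: assoc_mult_mat[of _ ?N ?N _ ?N _ ?N])
  hence QQ: "Q\<^sup>T * Q = 1\<^sub>m ?N" using HH KTK K by simp
  have "Q\<^sup>T * A * Q = K\<^sup>T * B * K" unfolding QT unfolding Q_def B_def using H K A
    by (simp add: assoc_mult_mat[of _ ?N ?N _ ?N _ ?N])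
  also have "\<dots> = four_block_mat L1 (0\<^sub>m 1 n) (0\<^sub>m n 1) (Q'\<^sup>T * B3 * Q')"
  proof -
    have L1: "L1 \<in> carrier_mat 1 1" by (simp add: L1_def)
    have "K\<^sup>T * B = four_block_mat L1 (0\<^sub>m 1 n) (0\<^sub>m n 1) (Q'\<^sup>T * B3)"
      unfolding KT Bblock using Q' B3 L1
      by (subst mult_four_block_mat[of _ 1 1 _ n _ n _ _ 1 _ n]) auto
    moreover have "four_block_mat L1 (0\<^sub>m 1 n) (0\<^sub>m n 1) (Q'\<^sup>T * B3) * K
       = four_block_mat L1 (0\<^sub>m 1 n) (0\<^sub>m n 1) (Q'\<^sup>T * B3 * Q')"
      unfolding K_def using Q' B3 L1
      by (subst mult_four_block_mat[of _ 1 1 _ n _ n _ _ 1 _ n]) auto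
    ultimately show ?thesis by simp
  qed
  also have "\<dots> = diag_of ?N (\<lambda>i. if i = 0 then lam else mu' (i - 1))"
    unfolding Q'B by (intro eq_matI) (auto simp: diag_of_def L1_def)
  finally show ?case using Q QQ by blast
qed

lemma lp_sorted:
  fixes s :: "real list" and w :: "nat \<Rightarrow> real"
  assumes s: "sorted s" "length s = n" and w0: "\<And>j. j < n \<Longrightarrow> 0 \<le> w j"
    and w1: "\<And>j. j < n \<Longrightarrow> w j \<le> 1" and ws: "(\<Sum>j<n. w j) = real k"
    and k: "1 \<le> k" "k \<le> n"
  shows "(\<Sum>i<k. s ! i) \<le> (\<Sum>j<n. s ! j * w j)"
proof -
  define c where "c = s ! (k - 1)"
  have lo: "s ! j \<le> c" if "j < k" for j
    unfolding c_def using that k s by (intro sorted_nth_mono) auto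
  have hi: "c \<le> s ! j" if "k \<le> j" "j < n" for j
    unfolding c_def using that k s by (intro sorted_nth_mono) auto
  have split: "(\<Sum>j<n. g j) = (\<Sum>j<k. g j) + (\<Sum>j\<in>{k..<n}. g j)" for g :: "nat \<Rightarrow> real"
    using k by (simp add: lessThan_atLeast0 sum.atLeastLessThan_concat)
  have "(\<Sum>j<k. c * (w j - 1)) \<le> (\<Sum>j<k. s ! j * w j - s ! j)"
  proof (rule sum_mono)
    fix j assume "j \<in> {..<k}"
    hence j: "j < k" "j < n" using k by auto
    have "(s ! j - c) * (w j - 1) \<ge> 0"
      using lo[OF j(1)] w1[OF j(2)] by (intro mult_nonpos_nonpos) auto
    thus "c * (w j - 1) \<le> s ! j * w j - s ! j" by (simp add: algebra_simps)
  qed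
  moreover have "(\<Sum>j\<in>{k..<n}. c * w j) \<le> (\<Sum>j\<in>{k..<n}. s ! j * w j)"
  proof (rule sum_mono)
    fix j assume "j \<in> {k..<n}"
    thus "c * w j \<le> s ! j * w j" using hi w0 by (intro mult_right_mono) auto
  qed
  moreover have "(\<Sum>j<k. c * (w j - 1)) + (\<Sum>j\<in>{k..<n}. c * w j) = c * (\<Sum>j<n. w j) - c * k"
    unfolding split[of w] by (simp add: sum_distrib_left[symmetric] sum_subtractf algebra_simps)
  ultimately have "c * (\<Sum>j<n. w j) - c * k \<le> (\<Sum>j<k. s ! j * w j - s ! j) + (\<Sum>j\<in>{k..<n}. s ! j * w j)"
    by linarith
  also have "\<dots> = (\<Sum>j<n. s ! j * w j) - (\<Sum>j<k. s ! j)"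
    unfolding split[of "\<lambda>j. s ! j * w j"] by (simp add: sum_subtractf)
  finally show ?thesis unfolding ws by simp
qed

lemma lp_perm:
  fixes mu w :: "nat \<Rightarrow> real"
  assumes w0: "\<And>j. j < n \<Longrightarrow> 0 \<le> w j"
    and w1: "\<And>j. j < n \<Longrightarrow> w j \<le> 1" and ws: "(\<Sum>j<n. w j) = real k"
    and k: "1 \<le> k" "k \<le> n"
  shows "(\<Sum>i<k. sort (map mu [0..<n]) ! i) \<le> (\<Sum>j<n. mu j * w j)"
proof -
  define s where "s = sort (map mu [0..<n])"
  have ms: "mset s = mset (map mu [0..<n])" unfolding s_def by simp
  obtain f where f: "bij_betw f {..<length s} {..<length (map mu [0..<n])}"
    and fs: "\<forall>i<length s. s ! i = map mu [0..<n] ! f i"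
    using permutation_Ex_bij[OF ms] by blast
  have ls: "length s = n" unfolding s_def by simp
  have f': "bij_betw f {..<n} {..<n}" using f ls by simp
  have fn: "f i < n" if "i < n" for i using f' that by (auto dest: bij_betwE)
  have fs': "s ! i = mu (f i)" if "i < n" for i using fs ls that fn[OF that] by simp
  have "(\<Sum>j<n. mu j * w j) = (\<Sum>i<n. mu (f i) * w (f i))"
    using sum.reindex_bij_betw[OF f', of "\<lambda>j. mu j * w j"] by simp
  also have "\<dots> = (\<Sum>i<n. s ! i * (w \<circ> f) i)" using fs' by simp
  finally have eq: "(\<Sum>j<n. mu j * w j) = (\<Sum>i<n. s ! i * (w \<circ> f) i)" .
  have ws': "(\<Sum>i<n. (w \<circ> f) i) = real k"
    using sum.reindex_bij_betw[OF f', of w] ws by simp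
  have "(\<Sum>i<k. s ! i) \<le> (\<Sum>i<n. s ! i * (w \<circ> f) i)"
    by (rule lp_sorted[OF _ ls _ _ ws' k]) (use w0 w1 fn in \<open>auto simp: s_def\<close>)
  thus ?thesis unfolding eq s_def .
qed

lemma proots_linear_prod: "proots (\<Prod>a\<leftarrow>xs. [:- a, 1:]) = mset (xs :: real list)"
proof (induction xs)
  case Nil then show ?case by simp
next
  case (Cons a xs)
  have nz: "(\<Prod>a\<leftarrow>xs. [:- a, 1:]) \<noteq> (0 :: real poly)"
    by (auto simp: prod_list_zero_iff)
  have "(\<Prod>a\<leftarrow>a # xs. [:- a, 1:]) = [:- a, 1:] * (\<Prod>a\<leftarrow>xs. [:- a, 1:])" by simp
  also have "proots \<dots> = proots [:- a, 1:] + proots (\<Prod>a\<leftarrow>xs. [:- a, 1:])"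
    by (rule proots_mult) (use nz in auto)
  also have "proots [:- a, 1 :: real:] = {#a#}" using proots_linear_factor[of "- a"] by simp
  finally show ?case using Cons.IH by simp
qed

lemma eig_asc_diag:
  fixes A Q :: "real mat"
  assumes A: "A \<in> carrier_mat n n" and Q: "Q \<in> carrier_mat n n"
    and QQ: "Q\<^sup>T * Q = 1\<^sub>m n" and QAQ: "Q\<^sup>T * A * Q = diag_of n mu"
  shows "eig_asc A i = sort (map mu [0..<n]) ! i"
proof -
  have QT: "Q\<^sup>T \<in> carrier_mat n n" using Q by simp
  have QQ': "Q * Q\<^sup>T = 1\<^sub>m n" using mat_mult_left_right_inverse[OF QT Q QQ] .
  have D: "diag_of n mu \<in> carrier_mat n n" by (simp add: diag_of_def)
  have "Q * diag_of n mu * Q\<^sup>T = (Q * Q\<^sup>T) * A * (Q * Q\<^sup>T)"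
    unfolding QAQ[symmetric] using Q QT A
    by (simp add: assoc_mult_mat[of _ n n _ n _ n])
  hence AD: "A = Q * diag_of n mu * Q\<^sup>T" using QQ' A by simp
  have sim: "similar_mat A (diag_of n mu)"
    by (rule similar_matI[of A "diag_of n mu" Q "Q\<^sup>T" n]) (use A D Q QT QQ QQ' AD in auto)
  have ut: "upper_triangular (diag_of n mu)" by (auto simp: upper_triangular_def diag_of_def)
  have dm: "diag_mat (diag_of n mu) = map mu [0..<n]"
    by (simp add: diag_mat_def diag_of_def list_eq_iff_nth_eq)
  have "char_poly A = (\<Prod>a\<leftarrow>map mu [0..<n]. [:- a, 1:])"
    unfolding char_poly_similar[OF sim] char_poly_upper_triangular[OF D ut] dm ..
  hence "proots (char_poly A) = mset (map mu [0..<n])" using proots_linear_prod[of "map mu [0..<n]"]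
    by (simp only:)
  thus ?thesis unfolding eig_asc_def by (simp only: sorted_list_of_multiset_mset)
qed

lemma sprod_sum: "v \<in> carrier_vec n \<Longrightarrow> w \<in> carrier_vec n \<Longrightarrow> v \<bullet> w = (\<Sum>t<n. v $ t * w $ t)"
  by (simp add: scalar_prod_def lessThan_atLeast0)

lemma bessel:
  fixes q :: "real vec" and x :: "nat \<Rightarrow> real vec"
  assumes q: "q \<in> carrier_vec n" and x: "\<And>i. i < k \<Longrightarrow> x i \<in> carrier_vec n"
    and orth: "\<And>i j. i < k \<Longrightarrow> j < k \<Longrightarrow> x i \<bullet> x j = (if i = j then 1 else 0)"
  shows "(\<Sum>i<k. (q \<bullet> x i)\<^sup>2) \<le> q \<bullet> q"
proof -
  define a where "a i = q \<bullet> x i" for i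
  have a: "a i = (\<Sum>t<n. q $ t * x i $ t)" if "i < k" for i
    unfolding a_def using sprod_sum[OF q x[OF that]] .
  have o: "(\<Sum>t<n. x i $ t * x l $ t) = (if i = l then 1 else 0)" if "i < k" "l < k" for i l
    using orth[OF that] sprod_sum[OF x[OF that(1)] x[OF that(2)]] by simp
  have qq: "q \<bullet> q = (\<Sum>t<n. q $ t * q $ t)" using sprod_sum[OF q q] .
  have t2: "(\<Sum>t<n. q $ t * (\<Sum>i<k. a i * x i $ t)) = (\<Sum>i<k. a i * a i)"
  proof -
    have "(\<Sum>t<n. q $ t * (\<Sum>i<k. a i * x i $ t)) = (\<Sum>i<k. a i * (\<Sum>t<n. q $ t * x i $ t))"
      by (simp add: sum_distrib_left sum.swap[of _ "{..<n}"] algebra_simps)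
    also have "\<dots> = (\<Sum>i<k. a i * a i)" using a by simp
    finally show ?thesis .
  qed
  have t3: "(\<Sum>t<n. (\<Sum>i<k. a i * x i $ t) * (\<Sum>l<k. a l * x l $ t)) = (\<Sum>i<k. a i * a i)"
  proof -
    have "(\<Sum>t<n. (\<Sum>i<k. a i * x i $ t) * (\<Sum>l<k. a l * x l $ t))
        = (\<Sum>i<k. \<Sum>l<k. a i * a l * (\<Sum>t<n. x i $ t * x l $ t))"
      by (simp add: sum_distrib_left sum_distrib_right sum.swap[of _ "{..<n}"] algebra_simps)
    also have "\<dots> = (\<Sum>i<k. \<Sum>l<k. a i * a l * (if i = l then 1 else 0))"
      using o by simp
    also have "\<dots> = (\<Sum>i<k. \<Sum>l<k. if i = l then a i * a l else 0)"
      by (intro sum.cong) auto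
    also have "\<dots> = (\<Sum>i<k. a i * a i)"
      by (intro sum.cong refl) (subst sum.delta', auto)
    finally show ?thesis .
  qed
  have "0 \<le> (\<Sum>t<n. (q $ t - (\<Sum>i<k. a i * x i $ t)) * (q $ t - (\<Sum>i<k. a i * x i $ t)))"
    by (intro sum_nonneg) simp
  also have "\<dots> = (\<Sum>t<n. q $ t * q $ t) - 2 * (\<Sum>t<n. q $ t * (\<Sum>i<k. a i * x i $ t))
      + (\<Sum>t<n. (\<Sum>i<k. a i * x i $ t) * (\<Sum>l<k. a l * x l $ t))"
    by (simp add: sum_subtractf sum.distrib sum_distrib_left algebra_simps)
  also have "\<dots> = q \<bullet> q - (\<Sum>i<k. a i * a i)" unfolding t2 t3 qq by simp
  finally show ?thesis unfolding a_def by (simp add: power2_eq_square)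
qed

lemma ky_fan:
  fixes A :: "real mat" and x :: "nat \<Rightarrow> real vec"
  assumes A: "A \<in> carrier_mat n n" and sym: "A\<^sup>T = A"
    and x: "\<And>i. i < k \<Longrightarrow> x i \<in> carrier_vec n"
    and orth: "\<And>i j. i < k \<Longrightarrow> j < k \<Longrightarrow> x i \<bullet> x j = (if i = j then 1 else 0)"
    and k: "1 \<le> k" "k \<le> n"
  shows "(\<Sum>i<k. eig_asc A i) \<le> (\<Sum>i<k. x i \<bullet> (A *\<^sub>v x i))"
proof -
  obtain Q mu where Q: "Q \<in> carrier_mat n n" and QQ: "Q\<^sup>T * Q = 1\<^sub>m n"
    and QAQ: "Q\<^sup>T * A * Q = diag_of n mu"
    using spectral[OF A sym] by blast
  have eig: "eig_asc A i = sort (map mu [0..<n]) ! i" for i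
    using eig_asc_diag[OF A Q QQ QAQ] .
  have QT: "Q\<^sup>T \<in> carrier_mat n n" using Q by simp
  have QQ': "Q * Q\<^sup>T = 1\<^sub>m n" using mat_mult_left_right_inverse[OF QT Q QQ] .
  have D: "diag_of n mu \<in> carrier_mat n n" by (simp add: diag_of_def)
  have "Q * diag_of n mu * Q\<^sup>T = (Q * Q\<^sup>T) * A * (Q * Q\<^sup>T)"
    unfolding QAQ[symmetric] using Q QT A
    by (simp add: assoc_mult_mat[of _ n n _ n _ n])
  hence AD: "A = Q * diag_of n mu * Q\<^sup>T" using QQ' A by simp
  define y where "y i = Q\<^sup>T *\<^sub>v x i" for i
  have y: "y i \<in> carrier_vec n" if "i < k" for i unfolding y_def using QT x[OF that] by simp
  have Dv: "diag_of n mu *\<^sub>v v = vec n (\<lambda>j. mu j * v $ j)" if v: "v \<in> carrier_vec n" for v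
  proof (rule eq_vecI)
    fix j assume "j < dim_vec (vec n (\<lambda>j. mu j * v $ j))"
    hence j: "j < n" by simp
    have "(diag_of n mu *\<^sub>v v) $ j = (\<Sum>t<n. (if j = t then mu j else 0) * v $ t)"
      using j v unfolding diag_of_def by (simp add: row_def sprod_sum[of _ n])
    also have "\<dots> = (\<Sum>t<n. (if j = t then 1 else 0) * (mu j * v $ t))"
      by (intro sum.cong) auto
    also have "\<dots> = mu j * v $ j" using sum_delta_l[OF j] .
    finally show "(diag_of n mu *\<^sub>v v) $ j = vec n (\<lambda>j. mu j * v $ j) $ j" using j by simp
  qed (simp add: diag_of_def)
  have quad: "x i \<bullet> (A *\<^sub>v x i) = (\<Sum>j<n. mu j * (y i $ j)\<^sup>2)" if i: "i < k" for i
  proof -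
    have "A *\<^sub>v x i = Q *\<^sub>v (diag_of n mu *\<^sub>v y i)"
      unfolding AD y_def using Q QT D x[OF i]
      by (simp add: assoc_mult_mat_vec[of _ n n _ n])
    moreover have "(Q\<^sup>T *\<^sub>v x i) \<bullet> (diag_of n mu *\<^sub>v y i) = x i \<bullet> (Q *\<^sub>v (diag_of n mu *\<^sub>v y i))"
      by (rule transpose_vec_mult_scalar[OF Q _ x[OF i]]) (use D y[OF i] in simp)
    ultimately have "x i \<bullet> (A *\<^sub>v x i) = y i \<bullet> (diag_of n mu *\<^sub>v y i)"
      by (simp add: y_def)
    also have "\<dots> = (\<Sum>j<n. y i $ j * (mu j * y i $ j))"
      unfolding Dv[OF y[OF i]] using y[OF i] by (simp add: sprod_sum[of _ n])
    finally show ?thesis by (simp add: power2_eq_square algebra_simps)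
  qed
  have ynorm: "(\<Sum>j<n. (y i $ j)\<^sup>2) = 1" if i: "i < k" for i
  proof -
    have "y i \<bullet> y i = x i \<bullet> (Q *\<^sub>v y i)"
      unfolding y_def using transpose_vec_mult_scalar[OF Q _ x[OF i], of "Q\<^sup>T *\<^sub>v x i"] QT x[OF i] by simp
    also have "Q *\<^sub>v y i = x i" unfolding y_def using Q QT x[OF i] QQ'
      by (simp add: assoc_mult_mat_vec[of _ n n _ n, symmetric])
    finally have "y i \<bullet> y i = 1" using orth[OF i i] by simp
    thus ?thesis using y[OF i] by (simp add: sprod_sum[of _ n] power2_eq_square)
  qed
  have ycol: "y i $ j = col Q j \<bullet> x i" if i: "i < k" and j: "j < n" for i j
    unfolding y_def using QT Q j x[OF i] by (simp add: row_transpose)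
  define w where "w j = (\<Sum>i<k. (y i $ j)\<^sup>2)" for j
  have w0: "0 \<le> w j" for j unfolding w_def by (simp add: sum_nonneg)
  have w1: "w j \<le> 1" if j: "j < n" for j
  proof -
    have cQ: "col Q j \<in> carrier_vec n" using Q by (simp add: carrier_vecI)
    have "w j = (\<Sum>i<k. (col Q j \<bullet> x i)\<^sup>2)" unfolding w_def using ycol j by simp
    also have "\<dots> \<le> col Q j \<bullet> col Q j" by (rule bessel[OF cQ x orth])
    also have "col Q j \<bullet> col Q j = (Q\<^sup>T * Q) $$ (j, j)" using Q j by simp
    also have "\<dots> = 1" using QQ j by simp
    finally show ?thesis .
  qed
  have ws: "(\<Sum>j<n. w j) = real k"
    unfolding w_def using sum.swap[of "\<lambda>i j. (y i $ j)\<^sup>2" "{..<n}" "{..<k}"] ynorm by simp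
  have "(\<Sum>i<k. eig_asc A i) \<le> (\<Sum>j<n. mu j * w j)"
    unfolding eig by (rule lp_perm[OF w0 w1 ws k])
  also have "\<dots> = (\<Sum>i<k. \<Sum>j<n. mu j * (y i $ j)\<^sup>2)"
    unfolding w_def by (simp add: sum_distrib_left sum.swap[of _ "{..<n}"])
  also have "\<dots> = (\<Sum>i<k. x i \<bullet> (A *\<^sub>v x i))" using quad by simp
  finally show ?thesis .
qed

definition minv :: "nat \<Rightarrow> (nat \<times> nat) set \<Rightarrow> mstate \<Rightarrow> bool" where
  "minv M E st = (case st of (F, S, C) \<Rightarrow> finite F \<and> card F \<le> M \<and> F \<subseteq> C \<and> S \<subseteq> C
      \<and> (\<forall>b\<in>C. parents E b \<subseteq> C) \<and> finite C)"

lemma step_inv: "step M E op st = Some st' \<Longrightarrow> minv M E st \<Longrightarrow> minv M E st'"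
  by (cases st; cases op) (auto simp: minv_def split: if_splits intro: card_mono[THEN le_trans])

lemma run_append: "run M E (xs @ ys) st = (case run M E xs st of None \<Rightarrow> None | Some st' \<Rightarrow> run M E ys st')"
  by (induction xs arbitrary: st) (auto split: option.splits)

lemma run_Cons_Some:
  assumes "run M E (op # ops) st = Some st'"
  obtains st1 where "step M E op st = Some st1" "run M E ops st1 = Some st'"
  using assms by (auto split: option.splits)

lemma run_inv: "run M E ops st = Some st' \<Longrightarrow> minv M E st \<Longrightarrow> minv M E st'"
proof (induction ops arbitrary: st)
  case Nil then show ?case by simp
next
  case (Cons op ops)
  from Cons.prems(1) obtain st1 where "step M E op st = Some st1" "run M E ops st1 = Some st'"
    by (rule run_Cons_Some)
  with Cons show ?case using step_inv by blast
qed

lemma run_C: "run M E ops (F, S, C) = Some (F', S', C') \<Longrightarrow> C' = C \<union> {v. Compute v \<in> set ops}"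
proof (induction ops arbitrary: F S C)
  case Nil then show ?case by simp
next
  case (Cons op ops)
  from Cons.prems obtain st1 where s1: "step M E op (F, S, C) = Some st1" "run M E ops st1 = Some (F', S', C')"
    by (rule run_Cons_Some)
  obtain F1 S1 C1 where st1: "st1 = (F1, S1, C1)" by (cases st1)
  have "C' = C1 \<union> {v. Compute v \<in> set ops}" using Cons.IH s1(2) st1 by blast
  moreover have "C1 = C \<union> {v. op = Compute v}" using s1(1) st1 by (cases op) (auto split: if_splits)
  ultimately show ?case by auto
qed

lemma run_S: "run M E ops (F, S, C) = Some (F', S', C') \<Longrightarrow> S' = S \<union> {v. Write v \<in> set ops}"
proof (induction ops arbitrary: F S C)
  case Nil then show ?case by simp
next
  case (Cons op ops)
  from Cons.prems obtain st1 where s1: "step M E op (F, S, C) = Some st1" "run M E ops st1 = Some (F', S', C')"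
    by (rule run_Cons_Some)
  obtain F1 S1 C1 where st1: "st1 = (F1, S1, C1)" by (cases st1)
  have "S' = S1 \<union> {v. Write v \<in> set ops}" using Cons.IH s1(2) st1 by blast
  moreover have "S1 = S \<union> {v. op = Write v}" using s1(1) st1 by (cases op) (auto split: if_splits)
  ultimately show ?case by auto
qed

fun is_comp :: "io_op \<Rightarrow> bool" where
  "is_comp (Compute _) = True" | "is_comp _ = False"

lemma run_card: "run M E ops (F, S, C) = Some (F', S', C') \<Longrightarrow> finite C \<Longrightarrow>
   card C' = card C + length (filter is_comp ops)"
proof (induction ops arbitrary: F S C)
  case Nil then show ?case by simp
next
  case (Cons op ops)
  from Cons.prems(1) obtain st1 where s1: "step M E op (F, S, C) = Some st1" "run M E ops st1 = Some (F', S', C')"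
    by (rule run_Cons_Some)
  obtain F1 S1 C1 where st1: "st1 = (F1, S1, C1)" by (cases st1)
  have C1: "C1 = C \<union> {v. op = Compute v}" using s1(1) st1 by (cases op) (auto split: if_splits)
  have fin: "finite C1" using C1 Cons.prems(2) by (cases op) auto
  have "card C' = card C1 + length (filter is_comp ops)" using Cons.IH s1(2) st1 fin by blast
  moreover have "card C1 = card C + (if is_comp op then 1 else 0)"
    using s1(1) st1 Cons.prems(2) by (cases op) (auto split: if_splits)
  ultimately show ?case by simp
qed

lemma run_read:
  "run M E ops (F, S, C) = Some st' \<Longrightarrow> u \<in> C \<Longrightarrow> Compute v \<in> set ops \<Longrightarrow> (u, v) \<in> E
   \<Longrightarrow> u \<in> F \<or> Read u \<in> set ops"
proof (induction ops arbitrary: F S C)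
  case Nil then show ?case by simp
next
  case (Cons op ops)
  from Cons.prems(1) obtain st1 where s1: "step M E op (F, S, C) = Some st1" "run M E ops st1 = Some st'"
    by (rule run_Cons_Some)
  obtain F1 S1 C1 where st1: "st1 = (F1, S1, C1)" by (cases st1)
  show ?case
  proof (cases "op = Compute v")
    case True
    thus ?thesis using s1(1) Cons.prems(4) by (auto simp: parents_def split: if_splits)
  next
    case False
    hence "Compute v \<in> set ops" using Cons.prems(3) by auto
    moreover have "u \<in> C1" using s1(1) st1 Cons.prems(2) by (cases op) (auto split: if_splits)
    ultimately have "u \<in> F1 \<or> Read u \<in> set ops" using Cons.IH s1(2) st1 Cons.prems(4) by blast
    moreover have "u \<in> F1 \<Longrightarrow> u \<in> F \<or> op = Read u"
      using s1(1) st1 Cons.prems(2) by (cases op) (auto split: if_splits)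
    ultimately show ?thesis by auto
  qed
qed

lemma run_lost:
  "run M E ops (F, S, C) = Some st' \<Longrightarrow> w \<in> C \<Longrightarrow> w \<notin> F \<Longrightarrow> w \<notin> S \<Longrightarrow> Compute v \<in> set ops
   \<Longrightarrow> (w, v) \<notin> E"
proof (induction ops arbitrary: F S C)
  case Nil then show ?case by simp
next
  case (Cons op ops)
  from Cons.prems(1) obtain st1 where s1: "step M E op (F, S, C) = Some st1" "run M E ops st1 = Some st'"
    by (rule run_Cons_Some)
  obtain F1 S1 C1 where st1: "st1 = (F1, S1, C1)" by (cases st1)
  show ?case
  proof (cases "op = Compute v")
    case True
    thus ?thesis using s1(1) Cons.prems(3) by (auto simp: parents_def split: if_splits)
  next
    case False
    hence "Compute v \<in> set ops" using Cons.prems(5) by auto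
    moreover have "w \<in> C1" "w \<notin> F1" "w \<notin> S1"
      using s1(1) st1 Cons.prems(2-4) by (cases op; auto split: if_splits)+
    ultimately show ?thesis using Cons.IH s1(2) st1 by blast
  qed
qed

fun is_read :: "io_op \<Rightarrow> bool" where
  "is_read (Read _) = True" | "is_read _ = False"
fun is_write :: "io_op \<Rightarrow> bool" where
  "is_write (Write _) = True" | "is_write _ = False"
fun op_arg :: "io_op \<Rightarrow> nat" where
  "op_arg (Read u) = u" | "op_arg (Write u) = u" | "op_arg (Compute u) = u" | "op_arg (Evict u) = u"

lemma io_cost_split: "io_cost c = length (filter is_read c) + length (filter is_write c)"
  unfolding io_cost_def
proof (induction c)
  case (Cons a c) then show ?case by (cases a) auto
qed simp

lemma card_reads: "card {u. Read u \<in> set c} \<le> length (filter is_read c)"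
proof -
  have "{u. Read u \<in> set c} \<subseteq> op_arg ` set (filter is_read c)" by force
  hence "card {u. Read u \<in> set c} \<le> card (op_arg ` set (filter is_read c))"
    by (intro card_mono) auto
  also have "\<dots> \<le> card (set (filter is_read c))" by (rule card_image_le) simp
  also have "\<dots> \<le> length (filter is_read c)" by (rule card_length)
  finally show ?thesis .
qed

lemma card_writes: "card {u. Write u \<in> set c} \<le> length (filter is_write c)"
proof -
  have "{u. Write u \<in> set c} \<subseteq> op_arg ` set (filter is_write c)" by force
  hence "card {u. Write u \<in> set c} \<le> card (op_arg ` set (filter is_write c))"
    by (intro card_mono) auto
  also have "\<dots> \<le> card (set (filter is_write c))" by (rule card_image_le) simp
  also have "\<dots> \<le> length (filter is_write c)" by (rule card_length)
  finally show ?thesis .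
qed

lemma fin_reads: "finite {u. Read u \<in> set c}"
  by (rule finite_subset[of _ "op_arg ` set c"]) force+
lemma fin_writes: "finite {u. Write u \<in> set c}"
  by (rule finite_subset[of _ "op_arg ` set c"]) force+

definition out_edges :: "(nat \<times> nat) set \<Rightarrow> nat set \<Rightarrow> (nat \<times> nat) set" where
  "out_edges E V = {(a, b). (a, b) \<in> E \<and> a \<in> V \<and> b \<notin> V}"
definition in_edges :: "(nat \<times> nat) set \<Rightarrow> nat set \<Rightarrow> (nat \<times> nat) set" where
  "in_edges E V = {(a, b). (a, b) \<in> E \<and> b \<in> V \<and> a \<notin> V}"

lemma card_sigma_bound:
  assumes "finite X" "finite E" "\<And>a. card {w. (a, w) \<in> E} \<le> d"
  shows "card (Sigma X (\<lambda>a. {w. (a, w) \<in> E})) \<le> d * card X"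
proof -
  have fin: "finite {w. (a, w) \<in> E}" for a
    using assms(2) by (rule finite_subset[rotated, OF finite_imageI[of E snd]]) force
  have "card (Sigma X (\<lambda>a. {w. (a, w) \<in> E})) = (\<Sum>a\<in>X. card {w. (a, w) \<in> E})"
    using assms(1) fin by (simp add: card_SigmaI)
  also have "\<dots> \<le> (\<Sum>a\<in>X. d)" by (rule sum_mono) (use assms(3) in auto)
  finally show ?thesis by (simp add: mult.commute)
qed

lemma chunk_bound:
  assumes r1: "run M E c (F, S, C) = Some (F', S', C')"
    and r2: "run M E rest (F', S', C') = Some (Ff, Sf, Cf)"
    and inv0: "minv M E (F, S, C)"
    and EC: "E \<subseteq> Cf \<times> Cf" and finE: "finite E"
    and d: "\<And>a. card {w. (a, w) \<in> E} \<le> d"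
  shows "card (out_edges E (C' - C)) + card (in_edges E (C' - C)) \<le> d * (io_cost c + 2 * M)"
proof -
  define V where "V = C' - C"
  have inv1: "minv M E (F', S', C')" using run_inv[OF r1 inv0] .
  have C': "C' = C \<union> {v. Compute v \<in> set c}" using run_C[OF r1] .
  have Cf: "Cf = C' \<union> {v. Compute v \<in> set rest}" using run_C[OF r2] .
  have S': "S' = S \<union> {v. Write v \<in> set c}" using run_S[OF r1] .
  have i0: "finite F" "card F \<le> M" "F \<subseteq> C" "S \<subseteq> C" "\<And>b. b \<in> C \<Longrightarrow> parents E b \<subseteq> C" "finite C"
    using inv0 unfolding minv_def by auto
  have i1: "finite F'" "card F' \<le> M" "F' \<subseteq> C'" "S' \<subseteq> C'" "\<And>b. b \<in> C' \<Longrightarrow> parents E b \<subseteq> C'" "finite C'"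
    using inv1 unfolding minv_def by auto
  define Pu where "Pu = {u \<in> C. \<exists>v\<in>V. (u, v) \<in> E}"
  define Ou where "Ou = {w \<in> V. \<exists>v. (w, v) \<in> E \<and> v \<notin> C'}"
  have Pu: "Pu \<subseteq> F \<union> {u. Read u \<in> set c}"
  proof
    fix u assume "u \<in> Pu"
    then obtain v where u: "u \<in> C" "v \<in> V" "(u, v) \<in> E" unfolding Pu_def by auto
    have "Compute v \<in> set c" using u(2) C' unfolding V_def by auto
    thus "u \<in> F \<union> {u. Read u \<in> set c}" using run_read[OF r1 u(1) _ u(3)] by auto
  qed
  have Ou: "Ou \<subseteq> F' \<union> {u. Write u \<in> set c}"
  proof
    fix w assume "w \<in> Ou"
    then obtain v where w: "w \<in> V" "(w, v) \<in> E" "v \<notin> C'" unfolding Ou_def by auto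
    show "w \<in> F' \<union> {u. Write u \<in> set c}"
    proof (rule ccontr)
      assume nw: "w \<notin> F' \<union> {u. Write u \<in> set c}"
      have "w \<notin> S'" using nw S' w(1) i0(4) unfolding V_def by auto
      moreover have "w \<in> C'" using w(1) unfolding V_def by auto
      moreover have "Compute v \<in> set rest" using w(2,3) EC Cf by auto
      ultimately have "(w, v) \<notin> E" using run_lost[OF r2] nw by blast
      thus False using w(2) by simp
    qed
  qed
  have cP: "card Pu \<le> M + length (filter is_read c)"
  proof -
    have "card Pu \<le> card (F \<union> {u. Read u \<in> set c})"
      using Pu i0(1) by (intro card_mono) (auto intro: fin_reads fin_writes)
    also have "\<dots> \<le> card F + card {u. Read u \<in> set c}" by (rule card_Un_le)
    finally show ?thesis using i0(2) card_reads[of c] by linarith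
  qed
  have cO: "card Ou \<le> M + length (filter is_write c)"
  proof -
    have "card Ou \<le> card (F' \<union> {u. Write u \<in> set c})"
      using Ou i1(1) by (intro card_mono) (auto intro: fin_reads fin_writes)
    also have "\<dots> \<le> card F' + card {u. Write u \<in> set c}" by (rule card_Un_le)
    finally show ?thesis using i1(2) card_writes[of c] by linarith
  qed
  have finP: "finite Pu" using i0(6) unfolding Pu_def by simp
  have finO: "finite Ou" using i1(6) unfolding Ou_def V_def by simp
  have oe: "out_edges E V \<subseteq> Sigma Ou (\<lambda>a. {w. (a, w) \<in> E})"
  proof
    fix e assume "e \<in> out_edges E V"
    then obtain a b where e: "e = (a, b)" "(a, b) \<in> E" "a \<in> V" "b \<notin> V" unfolding out_edges_def by auto
    have "b \<notin> C'"
    proof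
      assume "b \<in> C'"
      hence "b \<in> C" using e(4) unfolding V_def by auto
      hence "a \<in> C" using i0(5)[of b] e(2) unfolding parents_def by auto
      thus False using e(3) unfolding V_def by auto
    qed
    thus "e \<in> Sigma Ou (\<lambda>a. {w. (a, w) \<in> E})" using e unfolding Ou_def by auto
  qed
  have ie: "in_edges E V \<subseteq> Sigma Pu (\<lambda>a. {w. (a, w) \<in> E})"
  proof
    fix e assume "e \<in> in_edges E V"
    then obtain a b where e: "e = (a, b)" "(a, b) \<in> E" "b \<in> V" "a \<notin> V" unfolding in_edges_def by auto
    have "b \<in> C'" using e(3) unfolding V_def by auto
    hence "a \<in> C'" using i1(5)[of b] e(2) unfolding parents_def by auto
    hence "a \<in> C" using e(4) unfolding V_def by auto
    thus "e \<in> Sigma Pu (\<lambda>a. {w. (a, w) \<in> E})" using e unfolding Pu_def by auto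
  qed
  have finS: "finite (Sigma X (\<lambda>a. {w. (a, w) \<in> E}))" if "finite X" for X
  proof (rule finite_SigmaI[OF that])
    fix a show "finite {w. (a, w) \<in> E}"
      using finE by (rule finite_subset[rotated, OF finite_imageI[of E snd]]) force
  qed
  have "card (out_edges E V) \<le> d * card Ou"
    using card_mono[OF finS[OF finO] oe] card_sigma_bound[OF finO finE d] by linarith
  moreover have "card (in_edges E V) \<le> d * card Pu"
    using card_mono[OF finS[OF finP] ie] card_sigma_bound[OF finP finE d] by linarith
  moreover have "d * card Ou + d * card Pu \<le> d * (io_cost c + 2 * M)"
  proof -
    have "card Ou + card Pu \<le> io_cost c + 2 * M" using cP cO unfolding io_cost_split by linarith
    hence "d * (card Ou + card Pu) \<le> d * (io_cost c + 2 * M)" by (rule mult_le_mono2)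
    thus ?thesis by (simp only: add_mult_distrib2)
  qed
  ultimately show ?thesis unfolding V_def by linarith
qed

lemma sum_if_const: "finite A \<Longrightarrow> (\<Sum>w\<in>A. if P w then (c::real) else 0) = c * card {w\<in>A. P w}"
  by (simp add: sum.inter_filter[symmetric])

lemma lap_quad:
  fixes s :: real and V :: "nat set"
  assumes V: "V \<subseteq> {0..<n}"
  defines "x \<equiv> vec n (\<lambda>i. if i \<in> V then s else 0)"
  shows "x \<bullet> (laplacian n E *\<^sub>v x) = s\<^sup>2 * card (Sigma V (\<lambda>u. {w. w < n \<and> w \<notin> V \<and> adj E u w}))"
proof -
  define deg where "deg u = card {w \<in> {0..<n}. adj E u w}" for u
  define cv where "cv u = card {w \<in> {..<n}. adj E u w \<and> w \<in> V}" for u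
  have L: "laplacian n E $$ (u, w) = (if u = w then real (deg u) else 0) - (if adj E u w then 1 else 0)"
    if "u < n" "w < n" for u w
    using that unfolding laplacian_def deg_mat_def adj_mat_def deg_def by simp
  have Lx: "(laplacian n E *\<^sub>v x) $ u = (if u \<in> V then s else 0) * deg u - s * cv u" if u: "u < n" for u
  proof -
    have "(laplacian n E *\<^sub>v x) $ u = (\<Sum>w<n. laplacian n E $$ (u, w) * x $ w)"
      using u unfolding x_def by (simp add: laplacian_def deg_mat_def adj_mat_def scalar_prod_def row_def lessThan_atLeast0)
    also have "\<dots> = (\<Sum>w<n. (if u = w then 1 else 0) * ((if w \<in> V then s else 0) * deg u))
         - (\<Sum>w<n. if adj E u w \<and> w \<in> V then s else 0)"
      unfolding sum_subtractf[symmetric] using u by (intro sum.cong) (auto simp: L x_def algebra_simps)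
    also have "\<dots> = (if u \<in> V then s else 0) * deg u - s * cv u"
      unfolding sum_delta_l[OF u] sum_if_const[OF finite_lessThan] cv_def by simp
    finally show ?thesis .
  qed
  have split: "real (deg u) - real (cv u) = real (card {w. w < n \<and> w \<notin> V \<and> adj E u w})" for u
  proof -
    have "{w \<in> {0..<n}. adj E u w} = {w \<in> {..<n}. adj E u w \<and> w \<in> V} \<union> {w. w < n \<and> w \<notin> V \<and> adj E u w}"
      by auto
    moreover have "card ({w \<in> {..<n}. adj E u w \<and> w \<in> V} \<union> {w. w < n \<and> w \<notin> V \<and> adj E u w})
        = cv u + card {w. w < n \<and> w \<notin> V \<and> adj E u w}"
      unfolding cv_def by (rule card_Un_disjoint) auto
    ultimately have "deg u = cv u + card {w. w < n \<and> w \<notin> V \<and> adj E u w}"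
      unfolding deg_def by simp
    thus ?thesis by simp
  qed
  have dimL: "dim_vec (laplacian n E *\<^sub>v x) = n" by (simp add: laplacian_def deg_mat_def adj_mat_def)
  have "x \<bullet> (laplacian n E *\<^sub>v x) = (\<Sum>u\<in>{0..<n}. x $ u * (laplacian n E *\<^sub>v x) $ u)"
    unfolding scalar_prod_def dimL ..
  also have "\<dots> = (\<Sum>u<n. x $ u * (laplacian n E *\<^sub>v x) $ u)" by (simp only: lessThan_atLeast0)
  also have "\<dots> = (\<Sum>u<n. if u \<in> V then s\<^sup>2 * (real (deg u) - real (cv u)) else 0)"
  proof (intro sum.cong refl)
    fix u assume "u \<in> {..<n}"
    hence u: "u < n" by simp
    have xu: "x $ u = (if u \<in> V then s else 0)" unfolding x_def using u by simp
    show "x $ u * (laplacian n E *\<^sub>v x) $ u = (if u \<in> V then s\<^sup>2 * (real (deg u) - real (cv u)) else 0)"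
      unfolding Lx[OF u] xu by (simp add: power2_eq_square algebra_simps)
  qed
  also have "\<dots> = (\<Sum>u\<in>V. s\<^sup>2 * (real (deg u) - real (cv u)))"
  proof -
    have "{u \<in> {..<n}. u \<in> V} = V" using V by auto
    thus ?thesis by (simp only: sum.inter_filter[OF finite_lessThan, symmetric])
  qed
  also have "\<dots> = s\<^sup>2 * (\<Sum>u\<in>V. real (card {w. w < n \<and> w \<notin> V \<and> adj E u w}))"
    unfolding split sum_distrib_left ..
  also have "(\<Sum>u\<in>V. real (card {w. w < n \<and> w \<notin> V \<and> adj E u w}))
      = real (card (Sigma V (\<lambda>u. {w. w < n \<and> w \<notin> V \<and> adj E u w})))"
    using V by (subst card_SigmaI) (auto intro: finite_subset[OF _ finite_atLeastLessThan])
  finally show ?thesis .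
qed

lemma cut_bound:
  assumes "finite E"
  shows "card (Sigma V (\<lambda>u. {w. w < n \<and> w \<notin> V \<and> adj E u w})) \<le> card (out_edges E V) + card (in_edges E V)"
proof -
  have "Sigma V (\<lambda>u. {w. w < n \<and> w \<notin> V \<and> adj E u w}) \<subseteq> out_edges E V \<union> prod.swap ` in_edges E V"
    unfolding out_edges_def in_edges_def adj_def by force
  moreover have fo: "finite (out_edges E V)" "finite (in_edges E V)"
    using assms unfolding out_edges_def in_edges_def by (auto intro: finite_subset[OF _ assms])
  ultimately have "card (Sigma V (\<lambda>u. {w. w < n \<and> w \<notin> V \<and> adj E u w})) \<le> card (out_edges E V \<union> prod.swap ` in_edges E V)"
    by (intro card_mono) auto
  also have "\<dots> \<le> card (out_edges E V) + card (prod.swap ` in_edges E V)" by (rule card_Un_le)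
  also have "card (prod.swap ` in_edges E V) \<le> card (in_edges E V)" by (rule card_image_le[OF fo(2)])
  finally show ?thesis by simp
qed

lemma lap_carrier: "laplacian n E \<in> carrier_mat n n"
  unfolding laplacian_def deg_mat_def adj_mat_def by (rule minus_carrier_mat) simp

lemma lap_sym: "(laplacian n E)\<^sup>T = laplacian n E"
  by (rule eq_matI) (auto simp: laplacian_def deg_mat_def adj_mat_def adj_def)

lemma indicator_orth:
  fixes V :: "nat \<Rightarrow> nat set"
  assumes sub: "\<And>i. i < k \<Longrightarrow> V i \<subseteq> {0..<n}" and ne: "\<And>i. i < k \<Longrightarrow> V i \<noteq> {}"
    and disj: "\<And>i j. i < k \<Longrightarrow> j < k \<Longrightarrow> i \<noteq> j \<Longrightarrow> V i \<inter> V j = {}"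
    and i: "i < k" and j: "j < k"
  defines "x \<equiv> \<lambda>i. vec n (\<lambda>t. if t \<in> V i then 1 / sqrt (real (card (V i))) else 0)"
  shows "x i \<bullet> x j = (if i = j then 1 else 0)"
proof -
  have fin: "finite (V i)" using sub[OF i] by (rule finite_subset) simp
  have cpos: "card (V i) > 0" using fin ne[OF i] by (simp add: card_gt_0_iff)
  have "x i \<bullet> x j = (\<Sum>t<n. x i $ t * x j $ t)"
    unfolding x_def by (simp add: scalar_prod_def lessThan_atLeast0)
  also have "\<dots> = (\<Sum>t<n. if t \<in> V i \<and> t \<in> V j then 1 / sqrt (real (card (V i))) * (1 / sqrt (real (card (V j)))) else 0)"
    unfolding x_def by (intro sum.cong) auto
  also have "\<dots> = 1 / sqrt (real (card (V i))) * (1 / sqrt (real (card (V j)))) * card {t \<in> {..<n}. t \<in> V i \<and> t \<in> V j}"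
    by (rule sum_if_const) simp
  also have "\<dots> = (if i = j then 1 else 0)"
  proof (cases "i = j")
    case True
    have "{t \<in> {..<n}. t \<in> V i \<and> t \<in> V j} = V i" using sub[OF i] True by auto
    thus ?thesis using True cpos by (simp add: real_sqrt_mult[symmetric])
  next
    case False
    have "{t \<in> {..<n}. t \<in> V i \<and> t \<in> V j} = {}" using disj[OF i j False] by auto
    thus ?thesis using False by simp
  qed
  finally show ?thesis .
qed

lemma io_cost_append: "io_cost (xs @ ys) = io_cost xs + io_cost ys"
  unfolding io_cost_def by simp

lemma main_bound:
  fixes n M k :: nat and E :: "(nat \<times> nat) set"
  assumes cg: "comp_graph n E" and En: "E \<noteq> {}" and k: "1 \<le> k" "k \<le> n"
    and val: "valid_eval M n E ops"
  shows "1 / real (Max (out_deg E ` {0..<n})) * real (n div k)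
                * (\<Sum>i<k. eig_asc (laplacian n E) i) - 2 * real k * real M \<le> real (io_cost ops)"
proof -
  define d where "d = Max (out_deg E ` {0..<n})"
  define q where "q = n div k"
  have Esub: "E \<subseteq> {0..<n} \<times> {0..<n}" using cg unfolding comp_graph_def by auto
  have finE: "finite E" using Esub by (rule finite_subset) simp
  have dbound: "card {w. (a, w) \<in> E} \<le> d" for a
  proof (cases "a < n")
    case True
    thus ?thesis unfolding d_def out_deg_def by (intro Max_ge) auto
  next
    case False
    hence "{w. (a, w) \<in> E} = {}" using Esub by auto
    thus ?thesis by simp
  qed
  have dpos: "d > 0"
  proof -
    obtain a b where ab: "(a, b) \<in> E" using En by auto
    have "finite {w. (a, w) \<in> E}" using finE
      by (rule finite_subset[rotated, OF finite_imageI[of E snd]]) force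
    hence "card {w. (a, w) \<in> E} > 0" using ab by (auto simp: card_gt_0_iff)
    thus ?thesis using dbound[of a] by linarith
  qed
  have qpos: "q \<ge> 1" unfolding q_def using div_le_mono[OF k(2), of k] k by simp
  have kq: "k * q \<le> n" unfolding q_def by (simp add: mult.commute)
  obtain Ff Sf where runall: "run M E ops ({}, {}, {}) = Some (Ff, Sf, {0..<n})"
    using val unfolding valid_eval_def by auto
  define len where "len = length ops"
  define st where "st j = the (run M E (take j ops) ({}, {}, {}))" for j
  define CC where "CC j = snd (snd (st j))" for j
  have pre: "run M E (take j ops) ({}, {}, {}) = Some (st j)" if "j \<le> len" for j
  proof -
    have "run M E (take j ops @ drop j ops) ({}, {}, {}) = Some (Ff, Sf, {0..<n})" using runall by simp
    hence "run M E (take j ops) ({}, {}, {}) \<noteq> None" unfolding run_append by (auto split: option.splits)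
    thus ?thesis unfolding st_def by auto
  qed
  have inv0: "minv M E ({}, {}, {})" unfolding minv_def by simp
  have stinv: "minv M E (st j)" if "j \<le> len" for j using run_inv[OF pre[OF that] inv0] .
  have seg: "run M E (drop a (take b ops)) (st a) = Some (st b)" if "a \<le> b" "b \<le> len" for a b
  proof -
    have eq: "take b ops = take a ops @ drop a (take b ops)" using that
      by (metis append_take_drop_id min.absorb1 take_take)
    have "run M E (take b ops) ({}, {}, {}) = run M E (take a ops @ drop a (take b ops)) ({}, {}, {})"
      by (rule arg_cong[OF eq])
    also have "\<dots> = run M E (drop a (take b ops)) (st a)"
      using pre[of a] that by (simp add: run_append)
    finally have "run M E (take b ops) ({}, {}, {}) = run M E (drop a (take b ops)) (st a)" .
    thus ?thesis using pre[OF that(2)] by simp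
  qed
  have rest: "run M E (drop b ops) (st b) = Some (Ff, Sf, {0..<n})" if "b \<le> len" for b
  proof -
    have "run M E (take b ops @ drop b ops) ({}, {}, {}) = Some (Ff, Sf, {0..<n})" using runall by simp
    thus ?thesis unfolding run_append using pre[OF that] by simp
  qed
  have stlen: "st len = (Ff, Sf, {0..<n})" using pre[of len] runall unfolding len_def by simp
  have st0: "st 0 = ({}, {}, {})" unfolding st_def by simp
  have CCfin: "finite (CC j)" if "j \<le> len" for j
    using stinv[OF that] unfolding CC_def minv_def by (auto split: prod.splits)
  have CCmono: "CC a \<subseteq> CC b" if "a \<le> b" "b \<le> len" for a b
  proof -
    obtain F1 S1 C1 where s1: "st a = (F1, S1, C1)" by (cases "st a")
    obtain F2 S2 C2 where s2: "st b = (F2, S2, C2)" by (cases "st b")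
    show ?thesis using run_C[of M E _ F1 S1 C1 F2 S2 C2] seg[OF that] s1 s2 unfolding CC_def by auto
  qed
  have CCsub: "CC j \<subseteq> {0..<n}" if "j \<le> len" for j
    using CCmono[OF that order.refl] stlen unfolding CC_def by simp
  have cardCC: "card (CC j) = length (filter is_comp (take j ops))" if "j \<le> len" for j
  proof -
    obtain F1 S1 C1 where s1: "st j = (F1, S1, C1)" by (cases "st j")
    show ?thesis using run_card[of M E "take j ops" "{}" "{}" "{}" F1 S1 C1] pre[OF that] s1
      unfolding CC_def by simp
  qed
  have CC0: "card (CC 0) = 0" using st0 unfolding CC_def by simp
  have CClen: "card (CC len) = n" using stlen unfolding CC_def by simp
  have CCstep: "card (CC (Suc j)) \<le> card (CC j) + 1" if "Suc j \<le> len" for j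
  proof -
    have "take (Suc j) ops = take j ops @ [ops ! j]" using that unfolding len_def
      by (simp add: take_Suc_conv_app_nth)
    thus ?thesis using cardCC[OF that] cardCC[of j] that by simp
  qed
  define b where "b i = (if i < k then (LEAST j. i * q \<le> card (CC j)) else len)" for i
  have bex: "i * q \<le> card (CC len)" if "i < k" for i
  proof -
    have "i * q \<le> k * q" using that by simp
    thus ?thesis using kq CClen by linarith
  qed
  have ble: "b i \<le> len" for i
    unfolding b_def using bex Least_le[of "\<lambda>j. i * q \<le> card (CC j)" len] by auto
  have bcard: "card (CC (b i)) = i * q" if "i < k" for i
  proof -
    have ge: "i * q \<le> card (CC (b i))" unfolding b_def using that LeastI[of "\<lambda>j. i * q \<le> card (CC j)", OF bex[OF that]] by simp
    have "card (CC (b i)) \<le> i * q"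
    proof (cases "b i")
      case 0 thus ?thesis using CC0 by simp
    next
      case (Suc j)
      have "\<not> i * q \<le> card (CC j)"
        using not_less_Least[of j "\<lambda>j. i * q \<le> card (CC j)"] Suc that unfolding b_def by simp
      moreover have "card (CC (Suc j)) \<le> card (CC j) + 1" using CCstep[of j] Suc ble[of i] by simp
      ultimately show ?thesis using Suc by simp
    qed
    thus ?thesis using ge by simp
  qed
  have b0: "b 0 = 0" unfolding b_def using k by simp
  have bk: "b k = len" unfolding b_def by simp
  have bSuc: "b i \<le> b (Suc i)" for i
  proof (cases "Suc i < k")
    case True
    have "i * q \<le> Suc i * q" by simp
    also have "\<dots> = card (CC (b (Suc i)))" using bcard[OF True] by simp
    finally show ?thesis using True unfolding b_def by (simp add: Least_le)
  next
    case False
    thus ?thesis using ble[of i] unfolding b_def by auto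
  qed
  have bmono: "b i \<le> b j" if "i \<le> j" for i j using that by (rule lift_Suc_mono_le[of b, OF bSuc])
  define V where "V i = CC (b (Suc i)) - CC (b i)" for i
  have Vsub: "V i \<subseteq> {0..<n}" for i using CCsub[OF ble] unfolding V_def by blast
  have Vcard: "card (V i) \<ge> q" if "i < k" for i
  proof -
    have "card (V i) = card (CC (b (Suc i))) - card (CC (b i))"
      unfolding V_def using CCmono[OF bSuc ble] CCfin[OF ble] by (simp add: card_Diff_subset)
    moreover have "card (CC (b (Suc i))) \<ge> Suc i * q"
    proof (cases "Suc i < k")
      case True thus ?thesis using bcard[OF True] by simp
    next
      case False
      hence "Suc i = k" using that by simp
      thus ?thesis using bk CClen kq by simp
    qed
    ultimately show ?thesis using bcard[OF that] by simp
  qed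
  have Vne: "V i \<noteq> {}" if "i < k" for i using Vcard[OF that] qpos by auto
  have Vdisj: "V i \<inter> V j = {}" if "i < k" "j < k" "i \<noteq> j" for i j
  proof -
    have *: "V i \<inter> V j = {}" if "i < j" for i j
    proof -
      have "V i \<subseteq> CC (b j)" unfolding V_def using CCmono[OF bmono ble, of "Suc i" j] that by auto
      thus ?thesis unfolding V_def by auto
    qed
    show ?thesis using that *[of i j] *[of j i] by (cases "i < j") auto
  qed
  define chunk where "chunk i = drop (b i) (take (b (Suc i)) ops)" for i
  define cut where "cut i = card (out_edges E (V i)) + card (in_edges E (V i))" for i
  have chunkb: "cut i \<le> d * (io_cost (chunk i) + 2 * M)" for i
  proof -
    obtain F1 S1 C1 where s1: "st (b i) = (F1, S1, C1)" by (cases "st (b i)")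
    obtain F2 S2 C2 where s2: "st (b (Suc i)) = (F2, S2, C2)" by (cases "st (b (Suc i))")
    have r1: "run M E (chunk i) (F1, S1, C1) = Some (F2, S2, C2)"
      using seg[OF bSuc[of i] ble[of "Suc i"]] s1 s2 unfolding chunk_def by simp
    have r2: "run M E (drop (b (Suc i)) ops) (F2, S2, C2) = Some (Ff, Sf, {0..<n})"
      using rest[OF ble[of "Suc i"]] s2 by simp
    have "V i = C2 - C1" unfolding V_def CC_def using s1 s2 by simp
    thus ?thesis unfolding cut_def
      using chunk_bound[OF r1 r2 _ Esub finE dbound] stinv[OF ble[of i]] s1 by simp
  qed
  have iosum: "(\<Sum>i<k. real (io_cost (chunk i))) = real (io_cost ops)"
  proof -
    define g where "g i = real (io_cost (take (b i) ops))" for i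
    have "real (io_cost (chunk i)) = g (Suc i) - g i" for i
    proof -
      have "take (b (Suc i)) ops = take (b i) ops @ chunk i" unfolding chunk_def using bSuc[of i]
        by (metis append_take_drop_id min.absorb1 take_take)
      thus ?thesis unfolding g_def by (simp add: io_cost_append)
    qed
    hence "(\<Sum>i<k. real (io_cost (chunk i))) = g k - g 0" by (simp add: sum_lessThan_telescope)
    thus ?thesis unfolding g_def bk b0 len_def by (simp add: io_cost_def)
  qed
  define x where "x i = vec n (\<lambda>t. if t \<in> V i then 1 / sqrt (real (card (V i))) else 0)" for i
  have xc: "x i \<in> carrier_vec n" for i unfolding x_def by simp
  have orth: "x i \<bullet> x j = (if i = j then 1 else 0)" if "i < k" "j < k" for i j
    unfolding x_def by (rule indicator_orth[OF _ Vne Vdisj that]) (use Vsub in auto)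
  define Qc where "Qc i = card (Sigma (V i) (\<lambda>u. {w. w < n \<and> w \<notin> V i \<and> adj E u w}))" for i
  have xLx: "x i \<bullet> (laplacian n E *\<^sub>v x i) = real (Qc i) / real (card (V i))" if "i < k" for i
  proof -
    have "x i \<bullet> (laplacian n E *\<^sub>v x i) = (1 / sqrt (real (card (V i))))\<^sup>2 * real (Qc i)"
      unfolding x_def Qc_def by (rule lap_quad[OF Vsub])
    thus ?thesis by (simp add: power_divide)
  qed
  have kf: "(\<Sum>i<k. eig_asc (laplacian n E) i) \<le> (\<Sum>i<k. x i \<bullet> (laplacian n E *\<^sub>v x i))"
    by (rule ky_fan[OF lap_carrier lap_sym xc orth k])
  have step2: "real q * (x i \<bullet> (laplacian n E *\<^sub>v x i)) \<le> real (cut i)" if "i < k" for i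
  proof -
    have cpos: "real (card (V i)) > 0" using Vcard[OF that] qpos by simp
    have "real q * (real (Qc i) / real (card (V i))) \<le> real (card (V i)) * (real (Qc i) / real (card (V i)))"
      using Vcard[OF that] by (intro mult_right_mono) auto
    also have "\<dots> = real (Qc i)" using cpos by simp
    also have "\<dots> \<le> real (cut i)" unfolding Qc_def cut_def using cut_bound[OF finE, of "V i" n] by linarith
    finally show ?thesis using xLx[OF that] by simp
  qed
  have "real q * (\<Sum>i<k. eig_asc (laplacian n E) i) \<le> real q * (\<Sum>i<k. x i \<bullet> (laplacian n E *\<^sub>v x i))"
    using kf by (intro mult_left_mono) auto
  also have "\<dots> = (\<Sum>i<k. real q * (x i \<bullet> (laplacian n E *\<^sub>v x i)))" by (simp add: sum_distrib_left)
  also have "\<dots> \<le> (\<Sum>i<k. real (cut i))" by (rule sum_mono) (use step2 in auto)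
  also have "\<dots> \<le> (\<Sum>i<k. real d * (real (io_cost (chunk i)) + 2 * real M))"
  proof (rule sum_mono)
    fix i assume "i \<in> {..<k}"
    have "real (cut i) \<le> real (d * (io_cost (chunk i) + 2 * M))" using chunkb[of i] by linarith
    thus "real (cut i) \<le> real d * (real (io_cost (chunk i)) + 2 * real M)" by simp
  qed
  also have "\<dots> = real d * (real (io_cost ops) + 2 * real k * real M)"
    by (simp add: sum_distrib_left[symmetric] sum.distrib iosum)
  finally have main: "real q * (\<Sum>i<k. eig_asc (laplacian n E) i) \<le> real d * (real (io_cost ops) + 2 * real k * real M)" .
  have "1 / real d * real q * (\<Sum>i<k. eig_asc (laplacian n E) i)
      = (real q * (\<Sum>i<k. eig_asc (laplacian n E) i)) / real d" by simp
  also have "\<dots> \<le> real (io_cost ops) + 2 * real k * real M"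
    using main dpos by (simp add: divide_le_eq mult.commute)
  finally show ?thesis unfolding d_def q_def by simp
qed

theorem theorem4p5:
  fixes n M k :: nat and E :: "(nat \<times> nat) set"
  assumes "comp_graph n E"
    and "E \<noteq> {}"
    and "1 \<le> k" and "k \<le> n"
  shows "ereal (1 / real (Max (out_deg E ` {0..<n})) * real (n div k)
                * (\<Sum>i<k. eig_asc (laplacian n E) i) - 2 * real k * real M)
         \<le> ereal_of_enat (J_star M n E)"
proof (cases "{ops. valid_eval M n E ops} = {}")
  case True
  hence "J_star M n E = \<infinity>" unfolding J_star_def by (simp only: image_empty Inf_empty top_enat_def)
  thus ?thesis by simp
next
  case False
  define A where "A = (\<lambda>ops. enat (io_cost ops)) ` {ops. valid_eval M n E ops}"
  have Ane: "A \<noteq> {}" using False unfolding A_def by simp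
  obtain x0 where x0: "x0 \<in> A" using Ane by auto
  have inA: "(LEAST x. x \<in> A) \<in> A" by (rule LeastI[of "\<lambda>x. x \<in> A", OF x0])
  have "Inf A = (LEAST x. x \<in> A)" unfolding Inf_enat_def by (rule if_not_P[OF Ane])
  with inA have "Inf A \<in> A" by simp
  then obtain ops where ops: "ops \<in> {ops. valid_eval M n E ops}" and J0: "Inf A = enat (io_cost ops)"
    unfolding A_def by (rule imageE)
  have J: "J_star M n E = Inf A" unfolding J_star_def A_def ..
  have e: "ereal_of_enat (J_star M n E) = ereal (real (io_cost ops))" unfolding J J0 by simp
  have "1 / real (Max (out_deg E ` {0..<n})) * real (n div k)
                * (\<Sum>i<k. eig_asc (laplacian n E) i) - 2 * real k * real M \<le> real (io_cost ops)"
    using main_bound[OF assms] ops by simp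
  thus ?thesis unfolding e by simp
qed

end
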